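(* Let $G_0,G_1\in\mathbb{Z}$, let $(G_n)_{n\ge0}$ satisfy $G_n=G_{n-1}+G_{n-2}$ for $n\ge2$, and let $\mu = G_1^2 - G_0 G_1 - G_0^2$. Let $k \geq 1$ be odd and set $\ell_k = \gcd(G_{k+1} - G_1,\, G_{k+2} - G_2)$. If $2\mu$ divides $\ell_k$, then $\mathcal{G}^2_{G_0,G_1}(k\ell) = |2\mu|$ for all odd integers $\ell \geq 1$.
   Context: $\mathcal{G}^2_{G_0,G_1}(m)=\gcd\{\sum_{i=1}^m G_{n+i}^2 : n\ge 0\}$ (nonnegative gcd of this infinite set of integers). *)

theory Defs
  imports Main
begin

fun gfib :: "int \<Rightarrow> int \<Rightarrow> nat \<Rightarrow> int" where
  "gfib a b 0 = a"
| "gfib a b (Suc 0) = b"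
| "gfib a b (Suc (Suc n)) = gfib a b (Suc n) + gfib a b n"

definition gcd_sq_sums :: "int \<Rightarrow> int \<Rightarrow> nat \<Rightarrow> int" where
  "gcd_sq_sums a b m = Gcd {(\<Sum>i=1..m. (gfib a b (n + i))^2) | n. True}"

end

theory Submission
  imports Defs
begin

lemma gf_rec: "gfib a b (n+2) = gfib a b (n+1) + gfib a b n"
  by (simp add: numeral_2_eq_2)

lemma gf_cass: "(gfib a b (n+1))^2 - gfib a b n * gfib a b (n+1) - (gfib a b n)^2
   = (-1)^n * (b^2 - a*b - a^2)"
proof (induction n)
  case 0 then show ?case by simp
next
  case (Suc n)
  have e: "gfib a b (Suc n + 1) = gfib a b (n+1) + gfib a b n" using gf_rec[of a b n] by simp
  show ?case unfolding e using Suc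
    by (simp add: power2_eq_square algebra_simps)
qed

lemma gf_sum: "(\<Sum>i=1..m. (gfib a b (n + i))^2)
   = gfib a b (n+m) * gfib a b (n+m+1) - gfib a b n * gfib a b (n+1)"
proof (induction m)
  case 0 then show ?case by simp
next
  case (Suc m)
  have e: "gfib a b (n + m + 2) = gfib a b (n+m+1) + gfib a b (n+m)" using gf_rec[of a b "n+m"] by simp
  have "(\<Sum>i=1..Suc m. (gfib a b (n + i))^2) = (\<Sum>i=1..m. (gfib a b (n + i))^2) + (gfib a b (n+m+1))^2"
    by simp
  also have "\<dots> = gfib a b (n+Suc m) * gfib a b (n+Suc m+1) - gfib a b n * gfib a b (n+1)"
    using Suc e by (simp add: power2_eq_square algebra_simps)
  finally show ?case .
qed

lemma gf_D: "gfib a b (j+2) * gfib a b (j+3) - 3 * (gfib a b (j+1) * gfib a b (j+2))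
    + gfib a b j * gfib a b (j+1) = - ((-1)^j * (b^2 - a*b - a^2))"
proof -
  have e2: "gfib a b (j+2) = gfib a b (j+1) + gfib a b j" by (rule gf_rec)
  have e3: "gfib a b (j+3) = gfib a b (j+2) + gfib a b (j+1)" using gf_rec[of a b "j+1"]
    by (simp add: add.assoc eval_nat_numeral)
  show ?thesis unfolding gf_cass[of a b j, symmetric] e3 e2
    by (simp add: power2_eq_square algebra_simps)
qed

lemma dvd_prod_diff:
  fixes d x x' y y' :: int
  assumes "d dvd x - x'" "d dvd y - y'"
  shows "d dvd x * y - x' * y'"
proof -
  have "x * y - x' * y' = x * (y - y') + y' * (x - x')" by (simp add: algebra_simps)
  then show ?thesis using assms by simp
qed

theorem theorem4p11:
  fixes G0 G1 :: int and k :: nat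
  assumes "k \<ge> 1" and "odd k"
    and "2 * (G1^2 - G0 * G1 - G0^2) dvd
           gcd (gfib G0 G1 (k + 1) - gfib G0 G1 1) (gfib G0 G1 (k + 2) - gfib G0 G1 2)"
  shows "\<forall>l::nat. l \<ge> 1 \<and> odd l \<longrightarrow>
           gcd_sq_sums G0 G1 (k * l) = \<bar>2 * (G1^2 - G0 * G1 - G0^2)\<bar>"
proof (intro allI impI)
  fix l :: nat
  assume l: "l \<ge> 1 \<and> odd l"
  define G where "G = gfib G0 G1"
  define mu where "mu = G1^2 - G0 * G1 - G0^2"
  define m where "m = k * l"
  have modd: "odd m" using l assms(2) by (simp add: m_def)
  have h1: "2*mu dvd G (k+1) - G 1" and h2: "2*mu dvd G (k+2) - G 2"
    using assms(3) by (auto simp: G_def mu_def)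
  have P: "2*mu dvd G (n+1+k) - G (n+1) \<and> 2*mu dvd G (n+2+k) - G (n+2)" for n
  proof (induction n)
    case 0 then show ?case using h1 h2 by (simp add: add.commute numeral_2_eq_2)
  next
    case (Suc n)
    have "G (Suc n + 2 + k) - G (Suc n + 2) = (G (n+2+k) - G (n+2)) + (G (n+1+k) - G (n+1))"
      using gf_rec[of G0 G1 "n+1+k"] gf_rec[of G0 G1 "n+1"] unfolding G_def
      by (simp add: algebra_simps)
    then show ?case using Suc by (simp add: add.commute add.left_commute)
  qed
  have per: "2*mu dvd G (n+k) - G n" for n
  proof (cases n)
    case 0
    have "G (0+2+k) - G (0+2) - (G (0+1+k) - G (0+1)) = G k - G 0"
      using gf_rec[of G0 G1 k] gf_rec[of G0 G1 0] unfolding G_def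
      by (simp add: algebra_simps)
    then show ?thesis using P[of 0] 0 dvd_diff by (metis add_0)
  next
    case (Suc n') then show ?thesis using P[of n'] by (simp add: add.commute)
  qed
  have perl: "2*mu dvd G (n + k*j) - G n" for n j
  proof (induction j)
    case 0 then show ?case by simp
  next
    case (Suc j)
    have "G (n + k * Suc j) - G n = (G ((n + k*j) + k) - G (n+k*j)) + (G (n + k*j) - G n)"
      by (simp add: algebra_simps)
    then show ?case using Suc per[of "n+k*j"] by (metis dvd_add)
  qed
  define S where "S n = (\<Sum>i=1..m. (G (n + i))^2)" for n
  have Sf: "S n = G (n+m) * G (n+m+1) - G n * G (n+1)" for n
    unfolding S_def G_def by (rule gf_sum)
  have Sdvd: "2*mu dvd S n" for n
  proof -
    have a: "2*mu dvd G (n+m) - G n" using perl[of n l] by (simp add: m_def)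
    have b: "2*mu dvd G (n+m+1) - G (n+1)" using perl[of "n+1" l] by (simp add: m_def algebra_simps)
    show ?thesis unfolding Sf by (rule dvd_prod_diff[OF a b])
  qed
  have comb: "S 2 - 3 * S 1 + S 0 = 2 * mu"
  proof -
    have d0: "G (0+2) * G (0+3) - 3 * (G (0+1) * G (0+2)) + G 0 * G (0+1) = - ((-1)^0 * mu)"
      unfolding G_def mu_def by (rule gf_D)
    have dm: "G (m+2) * G (m+3) - 3 * (G (m+1) * G (m+2)) + G m * G (m+1) = - ((-1)^m * mu)"
      unfolding G_def mu_def by (rule gf_D)
    have "(-1::int)^m = -1" using modd by simp
    then show ?thesis using d0 dm unfolding Sf by (simp add: algebra_simps eval_nat_numeral)
  qed
  define X where "X = {(\<Sum>i=1..m. (gfib G0 G1 (n + i))^2) | n. True}"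
  have XS: "X = range S" unfolding X_def S_def G_def by auto
  have g1: "2*mu dvd Gcd X" unfolding XS by (rule Gcd_greatest) (auto intro: Sdvd)
  have "Gcd X dvd S 2 - 3 * S 1 + S 0" unfolding XS
    by (intro dvd_add dvd_diff dvd_mult Gcd_dvd) auto
  then have g2: "Gcd X dvd 2*mu" using comb by simp
  have "Gcd X = \<bar>2*mu\<bar>"
    by (rule zdvd_antisym_nonneg) (use g1 g2 in auto)
  then show "gcd_sq_sums G0 G1 (k * l) = \<bar>2 * (G1^2 - G0 * G1 - G0^2)\<bar>"
    unfolding gcd_sq_sums_def X_def[symmetric, unfolded m_def] m_def mu_def
    by (simp add: X_def m_def)
qed

end
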